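(* Let $G$ be a group with generating set $Y$. Let $S=\{x_0,\dots,x_m\}$ and $T=\{y_0,\dots,y_n\}$ be subsets of $Y$ with $x_0=y_0$. Assume (i) $[x_i,y_j]=1$ for $1\le i\le m$ and $1\le j\le n$, and (ii) $\langle y_0,y_1,\dots,y_n\rangle=\langle y_0y_1\cdots y_n\rangle\times\langle y_1,\dots,y_n\rangle$ (internal direct product). Then $[x_i,\langle y_0,\dots,y_n\rangle^2]=1$ for $1\le i\le m$, and $[y_j,\langle x_0,\dots,x_m\rangle^2]=1$ for $1\le j\le n$.
   Context: Conventions: $[x,y]=x^{-1}y^{-1}xy$; for a subgroup $H$, $H^2=[H,H]$ is its commutator subgroup; $[a,H]=1$ means $a$ commutes with every element of $H$. *)

theory Defs
  imports "HOL-Algebra.Algebra"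
begin

definition list_prod :: "('a, 'b) monoid_scheme \<Rightarrow> 'a list \<Rightarrow> 'a" where
  "list_prod G as = foldr (\<lambda>a b. a \<otimes>\<^bsub>G\<^esub> b) as \<one>\<^bsub>G\<^esub>"

definition internal_direct_product ::
  "('a, 'b) monoid_scheme \<Rightarrow> 'a set \<Rightarrow> 'a set \<Rightarrow> 'a set \<Rightarrow> bool" where
  "internal_direct_product G C A B \<longleftrightarrow>
     subgroup C G \<and>
     A \<lhd> (G\<lparr>carrier := C\<rparr>) \<and> B \<lhd> (G\<lparr>carrier := C\<rparr>) \<and>
     A \<inter> B = {\<one>\<^bsub>G\<^esub>} \<and> A <#>\<^bsub>G\<^esub> B = C"

end

theory Submission
  imports Defs
begin

lemma list_prod_in:
  assumes "subgroup H G" "set as \<subseteq> H" shows "list_prod G as \<in> H"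
  using assms(2) by (induction as) (auto simp: list_prod_def subgroup.one_closed[OF assms(1)] subgroup.m_closed[OF assms(1)])

definition cent :: "('a, 'b) monoid_scheme \<Rightarrow> 'a set \<Rightarrow> 'a set" where
  "cent G S = {g \<in> carrier G. \<forall>s\<in>S. g \<otimes>\<^bsub>G\<^esub> s = s \<otimes>\<^bsub>G\<^esub> g}"

context group begin

lemma comm_inv_right:
  assumes a: "a \<in> carrier G" and b: "b \<in> carrier G" and ab: "a \<otimes> b = b \<otimes> a"
  shows "inv a \<otimes> b = b \<otimes> inv a"
proof -
  have "inv a \<otimes> b = inv a \<otimes> (b \<otimes> a) \<otimes> inv a" using a b by (simp add: m_assoc)
  also have "\<dots> = inv a \<otimes> (a \<otimes> b) \<otimes> inv a" by (simp only: ab)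
  also have "\<dots> = b \<otimes> inv a" using a b by (simp add: m_assoc[symmetric])
  finally show ?thesis .
qed

lemma cent_subgroup:
  assumes S: "S \<subseteq> carrier G" shows "subgroup (cent G S) G"
proof
  show "cent G S \<subseteq> carrier G" unfolding cent_def by blast
  show "\<one> \<in> cent G S" using S unfolding cent_def by auto
next
  fix g h assume g: "g \<in> cent G S" and h: "h \<in> cent G S"
  have gc: "g \<in> carrier G" and hc: "h \<in> carrier G" using g h unfolding cent_def by blast+
  have "g \<otimes> h \<otimes> s = s \<otimes> (g \<otimes> h)" if s: "s \<in> S" for s
  proof -
    have sc: "s \<in> carrier G" using s S by blast
    have gs: "g \<otimes> s = s \<otimes> g" and hs: "h \<otimes> s = s \<otimes> h" using g h s unfolding cent_def by blast+
    have "g \<otimes> h \<otimes> s = g \<otimes> (h \<otimes> s)" using gc hc sc by (rule m_assoc)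
    also have "\<dots> = g \<otimes> (s \<otimes> h)" by (simp only: hs)
    also have "\<dots> = (g \<otimes> s) \<otimes> h" using gc sc hc by (rule m_assoc[symmetric])
    also have "\<dots> = (s \<otimes> g) \<otimes> h" by (simp only: gs)
    also have "\<dots> = s \<otimes> (g \<otimes> h)" using sc gc hc by (rule m_assoc)
    finally show ?thesis .
  qed
  then show "g \<otimes> h \<in> cent G S" using gc hc unfolding cent_def by blast
next
  fix g assume g: "g \<in> cent G S"
  have gc: "g \<in> carrier G" using g unfolding cent_def by blast
  have "inv g \<otimes> s = s \<otimes> inv g" if s: "s \<in> S" for s
    using comm_inv_right[OF gc _] s S g unfolding cent_def by blast
  then show "inv g \<in> cent G S" using gc unfolding cent_def by blast
qed

lemma comm_generate:
  assumes "S \<subseteq> carrier G" "a \<in> carrier G" "\<forall>s\<in>S. a \<otimes> s = s \<otimes> a" "h \<in> generate G S"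
  shows "a \<otimes> h = h \<otimes> a"
proof -
  have "S \<subseteq> cent G {a}" using assms by (auto simp: cent_def)
  then have "generate G S \<subseteq> cent G {a}"
    using generate_subgroup_incl cent_subgroup assms(2) by blast
  then show ?thesis using assms(4) by (auto simp: cent_def)
qed

lemma comm_left:
  assumes "x \<in> carrier G" "y \<in> carrier G" "z \<in> carrier G" "x \<otimes> y = y \<otimes> x"
  shows "x \<otimes> (y \<otimes> z) = y \<otimes> (x \<otimes> z)"
  using assms by (metis m_assoc)

lemma key:
  assumes N: "subgroup N G" and c: "c \<in> carrier G" and comm: "\<forall>g\<in>N. g \<otimes> c = c \<otimes> g"
  defines "L \<equiv> {g \<otimes> c [^] (k::int) | g k. g \<in> N}"
  shows "subgroup L G" and "derived_set G L \<subseteq> N"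
proof -
  have Nc: "N \<subseteq> carrier G" using N subgroup.subset by blast
  have pc: "g \<otimes> c [^] (k::int) = c [^] k \<otimes> g" if g: "g \<in> N" for g k
  proof -
    have gc: "g \<in> carrier G" using g Nc by blast
    have "c \<in> cent G {g}" using comm g c unfolding cent_def by auto
    then have "c [^] k \<in> cent G {g}"
      using subgroup_int_pow_closed[OF cent_subgroup] gc by blast
    then have "c [^] k \<otimes> g = g \<otimes> c [^] k" unfolding cent_def by blast
    then show ?thesis by (rule sym)
  qed
  have ck: "c [^] (k::int) \<in> carrier G" for k using c by (rule int_pow_closed)
  show "subgroup L G"
  proof
    show "L \<subseteq> carrier G" using Nc ck unfolding L_def by blast
    have "\<one> = \<one> \<otimes> c [^] (0::int)" by simp
    then show "\<one> \<in> L" unfolding L_def using subgroup.one_closed[OF N] by blast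
  next
    fix a b assume "a \<in> L" "b \<in> L"
    then obtain g1 k g2 l where a: "a = g1 \<otimes> c [^] (k::int)" "g1 \<in> N"
      and b: "b = g2 \<otimes> c [^] (l::int)" "g2 \<in> N" unfolding L_def by blast
    have g1: "g1 \<in> carrier G" and g2: "g2 \<in> carrier G" using a b Nc by blast+
    have "a \<otimes> b = g1 \<otimes> (c [^] k \<otimes> g2) \<otimes> c [^] l"
      unfolding a b using g1 g2 ck by (simp only: m_assoc m_closed)
    also have "\<dots> = g1 \<otimes> (g2 \<otimes> c [^] k) \<otimes> c [^] l" by (simp only: pc[OF b(2)])
    also have "\<dots> = (g1 \<otimes> g2) \<otimes> (c [^] k \<otimes> c [^] l)"
      using g1 g2 ck by (simp only: m_assoc m_closed)
    also have "\<dots> = (g1 \<otimes> g2) \<otimes> c [^] (k + l)" by (simp only: int_pow_mult[OF c, symmetric])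
    finally show "a \<otimes> b \<in> L" unfolding L_def using subgroup.m_closed[OF N a(2) b(2)] by blast
  next
    fix a assume "a \<in> L"
    then obtain g k where a: "a = g \<otimes> c [^] (k::int)" "g \<in> N" unfolding L_def by blast
    have gc: "g \<in> carrier G" using a Nc by blast
    have "inv a = inv (c [^] k \<otimes> g)" using a pc by simp
    also have "\<dots> = inv g \<otimes> inv (c [^] k)" by (rule inv_mult_group[OF ck gc])
    also have "\<dots> = inv g \<otimes> c [^] (-k)" using c by (simp only: int_pow_neg)
    finally show "inv a \<in> L" unfolding L_def using subgroup.m_inv_closed[OF N a(2)] by blast
  qed
  show "derived_set G L \<subseteq> N"
  proof
    fix x assume "x \<in> derived_set G L"
    then obtain a b where ab: "a \<in> L" "b \<in> L" "x = a \<otimes> b \<otimes> inv a \<otimes> inv b" by blast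
    then obtain g1 k g2 l where a: "a = g1 \<otimes> c [^] (k::int)" "g1 \<in> N"
      and b: "b = g2 \<otimes> c [^] (l::int)" "g2 \<in> N" unfolding L_def by blast
    have g1: "g1 \<in> carrier G" and g2: "g2 \<in> carrier G" using a b Nc by blast+
    define p where "p = c [^] k"
    define q where "q = c [^] l"
    have pcar: "p \<in> carrier G" and qcar: "q \<in> carrier G" unfolding p_def q_def using ck by blast+
    have pg2: "p \<otimes> g2 = g2 \<otimes> p" using pc[OF b(2)] unfolding p_def by simp
    have pq: "p \<otimes> q = q \<otimes> p" unfolding p_def q_def using c by (simp only: int_pow_mult[OF c, symmetric] add.commute)
    have qg1: "q \<otimes> inv g1 = inv g1 \<otimes> q"
      using pc[OF subgroup.m_inv_closed[OF N a(2)], of l] unfolding q_def by simp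
    have ig1: "inv g1 \<in> carrier G" and ig2: "inv g2 \<in> carrier G" and ip: "inv p \<in> carrier G"
      and iq: "inv q \<in> carrier G" using g1 g2 pcar qcar by simp_all
    have a': "a = g1 \<otimes> p" and b': "b = g2 \<otimes> q" unfolding p_def q_def using a b by simp_all
    have "x = g1 \<otimes> p \<otimes> (g2 \<otimes> q) \<otimes> (inv p \<otimes> inv g1) \<otimes> (inv q \<otimes> inv g2)"
      unfolding ab(3) a' b' inv_mult_group[OF g1 pcar] inv_mult_group[OF g2 qcar] ..
    also have "\<dots> = g1 \<otimes> (p \<otimes> (g2 \<otimes> (q \<otimes> (inv p \<otimes> (inv g1 \<otimes> (inv q \<otimes> inv g2))))))"
      using g1 g2 pcar qcar ig1 ig2 ip iq by (simp only: m_assoc m_closed)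
    also have "\<dots> = g1 \<otimes> (g2 \<otimes> (q \<otimes> (p \<otimes> (inv p \<otimes> (inv g1 \<otimes> (inv q \<otimes> inv g2))))))"
      using comm_left[OF pcar g2 _ pg2] comm_left[OF pcar qcar _ pq] g1 g2 pcar qcar ig1 ig2 ip iq
      by (simp only: m_closed)
    also have "p \<otimes> (inv p \<otimes> (inv g1 \<otimes> (inv q \<otimes> inv g2))) = inv g1 \<otimes> (inv q \<otimes> inv g2)"
      using pcar ip ig1 ig2 iq by (simp add: m_assoc[symmetric])
    also have "q \<otimes> (inv g1 \<otimes> (inv q \<otimes> inv g2)) = inv g1 \<otimes> (q \<otimes> (inv q \<otimes> inv g2))"
      using comm_left[OF qcar ig1 _ qg1] iq ig2 by simp
    also have "q \<otimes> (inv q \<otimes> inv g2) = inv g2"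
      using qcar iq ig2 by (simp add: m_assoc[symmetric])
    finally have "x = g1 \<otimes> (g2 \<otimes> (inv g1 \<otimes> inv g2))" .
    then show "x \<in> N" using N a b
      by (simp add: subgroup.m_closed subgroup.m_inv_closed)
  qed
qed

lemma comm_from_comm:
  assumes a: "a \<in> carrier G" and b: "b \<in> carrier G" and h: "inv a \<otimes> inv b \<otimes> a \<otimes> b = \<one>"
  shows "a \<otimes> b = b \<otimes> a"
proof -
  have "inv (b \<otimes> a) \<otimes> (a \<otimes> b) = inv a \<otimes> inv b \<otimes> a \<otimes> b"
    using a b by (simp only: inv_mult_group m_assoc inv_closed m_closed)
  with h have 1: "\<one> = inv (b \<otimes> a) \<otimes> (a \<otimes> b)" by simp
  have "a \<otimes> b = (b \<otimes> a) \<otimes> \<one>"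
    using iffD1[OF inv_solve_left[of "\<one>" "b \<otimes> a" "a \<otimes> b"] 1] a b by simp
  then show ?thesis using a b by simp
qed

end

theorem mainTheorem10:
  fixes G (structure) and Y :: "'a set" and x y :: "nat \<Rightarrow> 'a" and m n :: nat
  assumes "group G"
    and "Y \<subseteq> carrier G" and "generate G Y = carrier G"
    and "x ` {0..m} \<subseteq> Y" and "y ` {0..n} \<subseteq> Y"
    and "x 0 = y 0"
    and "\<forall>i\<in>{1..m}. \<forall>j\<in>{1..n}. inv (x i) \<otimes> inv (y j) \<otimes> x i \<otimes> y j = \<one>"
    and "internal_direct_product G (generate G (y ` {0..n}))
           (generate G {list_prod G (map y [0..<Suc n])}) (generate G (y ` {1..n}))"
  shows "(\<forall>i\<in>{1..m}. \<forall>h\<in>derived G (generate G (y ` {0..n})). x i \<otimes> h = h \<otimes> x i)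
       \<and> (\<forall>j\<in>{1..n}. \<forall>h\<in>derived G (generate G (x ` {0..m})). y j \<otimes> h = h \<otimes> y j)"
proof -
  interpret group G by fact
  define H where "H = generate G (y ` {0..n})"
  define z where "z = list_prod G (map y [0..<Suc n])"
  define A where "A = generate G {z}"
  define B where "B = generate G (y ` {1..n})"
  have yc: "y ` {0..n} \<subseteq> carrier G" using assms(2,5) by auto
  have xc: "x ` {0..m} \<subseteq> carrier G" using assms(2,4) by auto
  have yc1: "y ` {1..n} \<subseteq> carrier G" using yc by auto
  have idp: "subgroup H G" "A \<lhd> G\<lparr>carrier := H\<rparr>" "B \<lhd> G\<lparr>carrier := H\<rparr>" "A \<inter> B = {\<one>}" "A <#> B = H"
  proof -
    have "internal_direct_product G H A B" using assms(8) by (simp only: H_def A_def B_def z_def)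
    then show "subgroup H G" "A \<lhd> G\<lparr>carrier := H\<rparr>" "B \<lhd> G\<lparr>carrier := H\<rparr>" "A \<inter> B = {\<one>}" "A <#> B = H"
      unfolding internal_direct_product_def by blast+
  qed
  have Bsub: "subgroup B G" unfolding B_def using generate_is_subgroup[OF yc1] .
  have Bc: "B \<subseteq> carrier G" using Bsub subgroup.subset by blast
  have "set (map y [0..<Suc n]) \<subseteq> carrier G" using yc by (auto simp: atLeastLessThanSuc_atLeastAtMost)
  then have zc: "z \<in> carrier G" unfolding z_def
    using list_prod_in[OF subgroup_self] by blast
  have AH: "A \<subseteq> H" using subgroup.subset[OF normal_imp_subgroup[OF idp(2)]] by simp
  have BH: "B \<subseteq> H" using subgroup.subset[OF normal_imp_subgroup[OF idp(3)]] by simp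
  have zA: "z \<in> A" unfolding A_def by (rule generate.incl) simp
  have zB: "\<forall>b\<in>B. b \<otimes> z = z \<otimes> b"
  proof
    fix b assume b: "b \<in> B"
    have bc: "b \<in> carrier G" using b Bc by auto
    have zH: "z \<in> H" using zA AH by auto
    have bH: "b \<in> H" using b BH by auto
    have invc: "inv\<^bsub>G\<lparr>carrier := H\<rparr>\<^esub> g = inv g" if "g \<in> H" for g
      using m_inv_consistent[OF idp(1) that] .
    have Asub: "subgroup A G" unfolding A_def using generate_is_subgroup[of "{z}"] zc by blast
    have zH': "z \<in> carrier (G\<lparr>carrier := H\<rparr>)" using zH by simp
    have bH': "b \<in> carrier (G\<lparr>carrier := H\<rparr>)" using bH by simp
    have izA: "inv z \<in> A" using subgroup.m_inv_closed[OF Asub zA] .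
    have "z \<otimes> b \<otimes> inv z \<in> B"
      using normal.inv_op_closed2[OF idp(3) zH' b] by (simp add: invc[OF zH])
    then have t1: "z \<otimes> b \<otimes> inv z \<otimes> inv b \<in> B"
      using subgroup.m_closed[OF Bsub] subgroup.m_inv_closed[OF Bsub b] by blast
    have "b \<otimes> inv z \<otimes> inv b \<in> A"
      using normal.inv_op_closed2[OF idp(2) bH' izA] by (simp add: invc[OF bH])
    then have "z \<otimes> (b \<otimes> inv z \<otimes> inv b) \<in> A"
      using zA subgroup.m_closed[OF Asub] by blast
    moreover have "z \<otimes> (b \<otimes> inv z \<otimes> inv b) = z \<otimes> b \<otimes> inv z \<otimes> inv b"
      using zc bc by (simp only: m_assoc inv_closed m_closed)
    ultimately have "z \<otimes> b \<otimes> inv z \<otimes> inv b \<in> A" by simp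
    with t1 idp(4) have c1: "z \<otimes> b \<otimes> inv z \<otimes> inv b = \<one>" by blast
    have "z \<otimes> b \<otimes> inv z = (z \<otimes> b \<otimes> inv z \<otimes> inv b) \<otimes> b" using zc bc by (simp add: m_assoc)
    also have "\<dots> = b" using bc by (simp only: c1 l_one)
    finally have e: "z \<otimes> b \<otimes> inv z = b" .
    have "z \<otimes> b = (z \<otimes> b \<otimes> inv z) \<otimes> z" using zc bc by (simp add: m_assoc)
    also have "\<dots> = b \<otimes> z" by (simp only: e)
    finally show "b \<otimes> z = z \<otimes> b" by (rule sym)
  qed
  note K1 = key[OF Bsub zc zB]
  have HL: "H \<subseteq> {g \<otimes> z [^] (k::int) | g k. g \<in> B}"
  proof
    fix h assume "h \<in> H"
    then obtain a b where ab: "a \<in> A" "b \<in> B" "h = a \<otimes> b"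
      using idp(5) unfolding set_mult_def by auto
    obtain k where k: "a = z [^] (k::int)" using ab(1) generate_pow[OF zc] unfolding A_def by auto
    have "z [^] k \<in> cent G B" using zB zc Bc subgroup_int_pow_closed[OF cent_subgroup[OF Bc]]
      by (auto simp: cent_def)
    then have "h = b \<otimes> z [^] k" using ab k Bc by (auto simp: cent_def)
    then show "h \<in> {g \<otimes> z [^] (k::int) | g k. g \<in> B}" using ab by auto
  qed
  have dH: "derived G H \<subseteq> B"
    using generate_subgroup_incl[OF _ Bsub] mono_derived_set[OF HL] K1(2) unfolding derived_def by blast
  have xcomm: "x i \<otimes> h = h \<otimes> x i" if i: "i \<in> {1..m}" and h: "h \<in> B" for i h
  proof -
    have xi: "x i \<in> carrier G" using xc i by auto
    show ?thesis unfolding B_def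
      apply (rule comm_generate[OF yc1 xi _ h[unfolded B_def]])
      using assms(7) i yc1 xi comm_from_comm by blast
  qed
  have part1: "\<forall>i\<in>{1..m}. \<forall>h\<in>derived G H. x i \<otimes> h = h \<otimes> x i"
    using dH xcomm by blast
  define N where "N = cent G B"
  define p where "p = list_prod G (map y [1..<Suc n])"
  have Nsub: "subgroup N G" unfolding N_def using cent_subgroup[OF Bc] .
  have "set (map y [1..<Suc n]) \<subseteq> B" unfolding B_def
    by (auto simp: atLeastLessThanSuc_atLeastAtMost intro: generate.incl)
  then have pB: "p \<in> B" unfolding p_def using list_prod_in[OF Bsub] by blast
  have pc: "p \<in> carrier G" using pB Bc by auto
  have ipc: "inv p \<in> carrier G" using pc by simp
  have ipN: "\<forall>g\<in>N. g \<otimes> inv p = inv p \<otimes> g"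
    using subgroup.m_inv_closed[OF Bsub pB] unfolding N_def cent_def by auto
  note K2 = key[OF Nsub ipc ipN]
  have up: "[0..<Suc n] = 0 # [1..<Suc n]" by (simp only: upt_conv_Cons[of 0 "Suc n"] zero_less_Suc One_nat_def)
  have zp: "z = y 0 \<otimes> p" unfolding z_def p_def list_prod_def up by simp
  have y0c: "y 0 \<in> carrier G" using yc by auto
  have x0: "x 0 = z \<otimes> inv p [^] (1::int)" using zp assms(6) y0c pc by (simp add: m_assoc)
  have zN: "z \<in> N" unfolding N_def cent_def using zB zc by auto
  have XL: "x ` {0..m} \<subseteq> {g \<otimes> inv p [^] (k::int) | g k. g \<in> N}"
  proof
    fix w assume "w \<in> x ` {0..m}"
    then obtain i where i: "i \<in> {0..m}" "w = x i" by auto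
    show "w \<in> {g \<otimes> inv p [^] (k::int) | g k. g \<in> N}"
    proof (cases "i = 0")
      case True then show ?thesis using x0 zN i by auto
    next
      case False
      then have i1: "i \<in> {1..m}" using i by auto
      have "x i \<in> N" unfolding N_def cent_def using xcomm[OF i1] xc i by auto
      moreover have "x i \<in> carrier G" using xc i by blast
      then have "x i = x i \<otimes> inv p [^] (0::int)" by simp
      ultimately show ?thesis using i by blast
    qed
  qed
  have KL: "generate G (x ` {0..m}) \<subseteq> {g \<otimes> inv p [^] (k::int) | g k. g \<in> N}"
    using generate_subgroup_incl[OF XL K2(1)] .
  have dK: "derived G (generate G (x ` {0..m})) \<subseteq> N"
    using generate_subgroup_incl[OF _ Nsub] mono_derived_set[OF KL] K2(2) unfolding derived_def by blast
  have part2: "\<forall>j\<in>{1..n}. \<forall>h\<in>derived G (generate G (x ` {0..m})). y j \<otimes> h = h \<otimes> y j"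
  proof (intro ballI)
    fix j h assume j: "j \<in> {1..n}" and h: "h \<in> derived G (generate G (x ` {0..m}))"
    have "y j \<in> B" unfolding B_def using j by (auto intro: generate.incl)
    then show "y j \<otimes> h = h \<otimes> y j" using dK h unfolding N_def cent_def by auto
  qed
  show ?thesis using part1 part2 unfolding H_def by blast
qed

end
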